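(* Let $H'\subseteq E\setminus H$. Then every pair $(s_i,t_i)$, $i\in[k]$, is $(p,q+1)$-flex-connected in $H\cup H'$ if and only if, for every violating edge set $F$, $H'$ is a feasible augmentation for $F$.
   Context: Let $G=(V,E)$ be an undirected graph whose edge set is partitioned into safe edges $\mathcal{S}$ and unsafe edges $\mathcal{U}$, and let $(s_i,t_i)$, $i\in[k]$, be terminal pairs. Vertices $s,t$ are $(p,q)$-flex-connected in an edge set $H$ if every cut $\delta_H(S)$ with $|S\cap\{s,t\}|=1$ contains at least $p$ safe edges or at least $p+q$ edges in total. Let $H\subseteq E$ be such that every pair $(s_i,t_i)$ is $(p,q)$-flex-connected in $H$. A violating edge set is a set $F=\delta_H(S)$ for some $S\subseteq V$ with $|S\cap\{s_i,t_i\}|=1$ for some $i$, such that $|\delta_H(S)|=p+q$ and at most $p-1$ edges of $\delta_H(S)$ are safe. A set $H'\subseteq E\setminus H$ is a feasible augmentation for a violating edge set $F$ if for each $i\in[k]$ there is a path from $s_i$ to $t_i$ in the graph with edge set $(H\cup H')\setminus F$. *)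

theory Defs
  imports Main
begin

text \<open>An undirected (multi)graph with vertex set V, edge set E (edges are abstract
objects so parallel edges are allowed) and an endpoint map ends.\<close>

definition ugraph :: "'v set \<Rightarrow> 'e set \<Rightarrow> ('e \<Rightarrow> 'v set) \<Rightarrow> bool" where
  "ugraph V E ends \<longleftrightarrow> finite V \<and> finite E \<and>
     (\<forall>e\<in>E. \<exists>u v. u \<in> V \<and> v \<in> V \<and> ends e = {u, v})"

text \<open>The cut \<delta>_H(S): edges of H with exactly one endpoint in S.\<close>
definition cut :: "('e \<Rightarrow> 'v set) \<Rightarrow> 'e set \<Rightarrow> 'v set \<Rightarrow> 'e set" where
  "cut ends H S = {e \<in> H. ends e \<inter> S \<noteq> {} \<and> ends e - S \<noteq> {}}"

text \<open>S separates s and t: exactly one of s, t lies in S.\<close>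
definition separates :: "'v set \<Rightarrow> 'v \<Rightarrow> 'v \<Rightarrow> bool" where
  "separates S s t \<longleftrightarrow> card (S \<inter> {s, t}) = 1"

text \<open>(p,q)-flex-connectivity of s,t in edge set H (Safe = safe edges).\<close>
definition flex_connected ::
  "'v set \<Rightarrow> ('e \<Rightarrow> 'v set) \<Rightarrow> 'e set \<Rightarrow> nat \<Rightarrow> nat \<Rightarrow> 'e set \<Rightarrow> 'v \<Rightarrow> 'v \<Rightarrow> bool" where
  "flex_connected V ends Safe p q H s t \<longleftrightarrow>
     (\<forall>S \<subseteq> V. separates S s t \<longrightarrow>
        card (cut ends H S \<inter> Safe) \<ge> p \<or> card (cut ends H S) \<ge> p + q)"

text \<open>Violating edge set for H with respect to terminal pairs term i, i < k.\<close>
definition violating ::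
  "'v set \<Rightarrow> ('e \<Rightarrow> 'v set) \<Rightarrow> 'e set \<Rightarrow> nat \<Rightarrow> nat \<Rightarrow> 'e set \<Rightarrow> nat \<Rightarrow> (nat \<Rightarrow> 'v \<times> 'v)
     \<Rightarrow> 'e set \<Rightarrow> bool" where
  "violating V ends Safe p q H k term F \<longleftrightarrow>
     (\<exists>S \<subseteq> V. F = cut ends H S \<and>
        (\<exists>i < k. separates S (fst (term i)) (snd (term i))) \<and>
        card (cut ends H S) = p + q \<and>
        card (cut ends H S \<inter> Safe) < p)"  (* "at most p-1 safe edges", integer reading *)

text \<open>Adjacency via edges of X; a path from s to t exists iff (s,t) is in its
reflexive transitive closure.\<close>
definition adj :: "('e \<Rightarrow> 'v set) \<Rightarrow> 'e set \<Rightarrow> ('v \<times> 'v) set" where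
  "adj ends X = {(u, v). \<exists>e \<in> X. ends e = {u, v}}"

definition connected_in :: "('e \<Rightarrow> 'v set) \<Rightarrow> 'e set \<Rightarrow> 'v \<Rightarrow> 'v \<Rightarrow> bool" where
  "connected_in ends X s t \<longleftrightarrow> (s, t) \<in> (adj ends X)\<^sup>*"

definition feasible_augmentation ::
  "('e \<Rightarrow> 'v set) \<Rightarrow> 'e set \<Rightarrow> nat \<Rightarrow> (nat \<Rightarrow> 'v \<times> 'v) \<Rightarrow> 'e set \<Rightarrow> 'e set \<Rightarrow> 'e set \<Rightarrow> bool" where
  "feasible_augmentation ends E k term H H' F \<longleftrightarrow>
     H' \<subseteq> E - H \<and>
     (\<forall>i < k. connected_in ends ((H \<union> H') - F) (fst (term i)) (snd (term i)))"

end

theory Submission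
  imports Defs
begin

lemma sep_I: "(s \<in> S) \<noteq> (t \<in> S) \<Longrightarrow> separates S s t"
  unfolding separates_def
  by (cases "s \<in> S"; cases "t \<in> S"; auto simp: Int_insert_right)

lemma sep_D: "separates S s t \<Longrightarrow> s \<noteq> t \<Longrightarrow> (s \<in> S) \<noteq> (t \<in> S)"
  unfolding separates_def
  by (cases "s \<in> S"; cases "t \<in> S"; auto simp: Int_insert_right)

lemma crossing:
  assumes "(a, b) \<in> (adj ends X)\<^sup>*" "(a \<in> S) \<noteq> (b \<in> S)"
  shows "\<exists>e. e \<in> cut ends X S"
  using assms
proof (induction rule: rtrancl_induct)
  case base
  then show ?case by simp
next
  case (step y z)
  show ?case
  proof (cases "(a \<in> S) \<noteq> (y \<in> S)")
    case True
    then show ?thesis using step.IH by blast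
  next
    case False
    then have yz: "(y \<in> S) \<noteq> (z \<in> S)" using step.prems by blast
    from step.hyps(2) obtain e where e: "e \<in> X" "ends e = {y, z}"
      unfolding adj_def by blast
    have "e \<in> cut ends X S" unfolding cut_def using e yz by auto
    then show ?thesis by blast
  qed
qed

theorem claim4p1:
  fixes V :: "'v set" and E Safe H H' :: "'e set" and ends :: "'e \<Rightarrow> 'v set"
    and p q k :: nat and "term" :: "nat \<Rightarrow> 'v \<times> 'v"
  assumes graph: "ugraph V E ends"
    and safe: "Safe \<subseteq> E"
    and terms: "\<forall>i < k. fst (term i) \<in> V \<and> snd (term i) \<in> V"
    and H: "H \<subseteq> E"
    and flexH: "\<forall>i < k. flex_connected V ends Safe p q H (fst (term i)) (snd (term i))"
    and H': "H' \<subseteq> E - H"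
  shows "(\<forall>i < k. flex_connected V ends Safe p (q + 1) (H \<union> H') (fst (term i)) (snd (term i)))
     \<longleftrightarrow> (\<forall>F. violating V ends Safe p q H k term F \<longrightarrow>
              feasible_augmentation ends E k term H H' F)"
proof
  have finE: "finite E" using graph unfolding ugraph_def by blast
  have finU: "finite (cut ends (H \<union> H') S)" for S
    by (rule finite_subset[OF _ finE]) (use H H' in \<open>auto simp: cut_def\<close>)
  have finH: "finite (cut ends H S)" for S
    by (rule finite_subset[OF _ finE]) (use H in \<open>auto simp: cut_def\<close>)
  have sub: "cut ends H S \<subseteq> cut ends (H \<union> H') S" for S
    by (auto simp: cut_def)
  {
    assume L: "\<forall>i < k. flex_connected V ends Safe p (q + 1) (H \<union> H') (fst (term i)) (snd (term i))"
    show "\<forall>F. violating V ends Safe p q H k term F \<longrightarrow> feasible_augmentation ends E k term H H' F"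
    proof (intro allI impI)
      fix F assume "violating V ends Safe p q H k term F"
      then obtain S0 where F: "F = cut ends H S0" "card (cut ends H S0) = p + q"
          "card (cut ends H S0 \<inter> Safe) < p"
        unfolding violating_def by blast
      have finF: "finite F" using F finH by simp
      show "feasible_augmentation ends E k term H H' F"
        unfolding feasible_augmentation_def
      proof (intro conjI allI impI)
        show "H' \<subseteq> E - H" by (rule H')
        fix i assume i: "i < k"
        define s where "s = fst (term i)"
        define t where "t = snd (term i)"
        define X where "X = (H \<union> H') - F"
        show "connected_in ends ((H \<union> H') - F) (fst (term i)) (snd (term i))"
        proof (rule ccontr)
          assume nc: "\<not> connected_in ends ((H \<union> H') - F) (fst (term i)) (snd (term i))"
          define R where "R = {v \<in> V. connected_in ends X s v}"
          have sV: "s \<in> V" "t \<in> V" using terms i s_def t_def by auto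
          have sR: "s \<in> R" using sV unfolding R_def connected_in_def by auto
          have tR: "t \<notin> R" using nc unfolding R_def X_def s_def t_def by auto
          have sepR: "separates R s t" using sR tR by (intro sep_I) auto
          have RV: "R \<subseteq> V" unfolding R_def by auto
          have cutsub: "cut ends (H \<union> H') R \<subseteq> F"
          proof
            fix e assume e: "e \<in> cut ends (H \<union> H') R"
            then have eE: "e \<in> E" "e \<in> H \<union> H'" using H H' unfolding cut_def by auto
            then obtain u w where uw: "u \<in> V" "w \<in> V" "ends e = {u, w}"
              using graph unfolding ugraph_def by blast
            have cr: "(u \<in> R \<and> w \<notin> R) \<or> (w \<in> R \<and> u \<notin> R)"
              using e uw unfolding cut_def by auto
            show "e \<in> F"
            proof (rule ccontr)
              assume "e \<notin> F"
              then have "e \<in> X" using eE X_def by auto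
              then have a1: "(u, w) \<in> adj ends X" "(w, u) \<in> adj ends X"
                using uw unfolding adj_def by (auto intro!: bexI[of _ e])
              show False
                using cr
              proof
                assume "u \<in> R \<and> w \<notin> R"
                then have "(s, u) \<in> (adj ends X)\<^sup>*" "w \<notin> R"
                  unfolding R_def connected_in_def by auto
                moreover have "(s, w) \<in> (adj ends X)\<^sup>*"
                  using calculation(1) a1(1) by (rule rtrancl_into_rtrancl)
                ultimately show False using uw unfolding R_def connected_in_def by auto
              next
                assume "w \<in> R \<and> u \<notin> R"
                then have "(s, w) \<in> (adj ends X)\<^sup>*" "u \<notin> R"
                  unfolding R_def connected_in_def by auto
                moreover have "(s, u) \<in> (adj ends X)\<^sup>*"
                  using calculation(1) a1(2) by (rule rtrancl_into_rtrancl)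
                ultimately show False using uw unfolding R_def connected_in_def by auto
              qed
            qed
          qed
          have c1: "card (cut ends (H \<union> H') R) \<le> p + q"
            using card_mono[OF finF cutsub] F by simp
          have c2: "card (cut ends (H \<union> H') R \<inter> Safe) < p"
          proof -
            have "card (cut ends (H \<union> H') R \<inter> Safe) \<le> card (F \<inter> Safe)"
              using cutsub finF by (intro card_mono) auto
            then show ?thesis using F by simp
          qed
          have "flex_connected V ends Safe p (q + 1) (H \<union> H') s t"
            using L i s_def t_def by auto
          then have "card (cut ends (H \<union> H') R \<inter> Safe) \<ge> p \<or> card (cut ends (H \<union> H') R) \<ge> p + (q + 1)"
            using RV sepR unfolding flex_connected_def by blast
          then show False using c1 c2 by linarith
        qed
      qed
    qed
  }
  {
    assume R: "\<forall>F. violating V ends Safe p q H k term F \<longrightarrow> feasible_augmentation ends E k term H H' F"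
    show "\<forall>i < k. flex_connected V ends Safe p (q + 1) (H \<union> H') (fst (term i)) (snd (term i))"
    proof (intro allI impI)
      fix i assume i: "i < k"
      show "flex_connected V ends Safe p (q + 1) (H \<union> H') (fst (term i)) (snd (term i))"
        unfolding flex_connected_def
      proof (intro allI impI)
        fix S assume SV: "S \<subseteq> V" and sep: "separates S (fst (term i)) (snd (term i))"
        have fl: "p \<le> card (cut ends H S \<inter> Safe) \<or> p + q \<le> card (cut ends H S)"
          using flexH i SV sep unfolding flex_connected_def by blast
        have m1: "card (cut ends H S \<inter> Safe) \<le> card (cut ends (H \<union> H') S \<inter> Safe)"
          using sub finU by (intro card_mono) auto
        have m2: "card (cut ends H S) \<le> card (cut ends (H \<union> H') S)"
          using sub finU by (intro card_mono) auto
        show "p \<le> card (cut ends (H \<union> H') S \<inter> Safe) \<or> p + (q + 1) \<le> card (cut ends (H \<union> H') S)"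
        proof (cases "p \<le> card (cut ends H S \<inter> Safe)")
          case True then show ?thesis using m1 by linarith
        next
          case False
          then have big: "p + q \<le> card (cut ends H S)" using fl by blast
          show ?thesis
          proof (cases "card (cut ends H S) = p + q")
            case False then show ?thesis using big m2 by linarith
          next
            case eq: True
            have "violating V ends Safe p q H k term (cut ends H S)"
              unfolding violating_def using SV i sep eq \<open>\<not> p \<le> _\<close>
              by (intro exI[of _ S]) auto
            then have "feasible_augmentation ends E k term H H' (cut ends H S)" using R by blast
            then have "connected_in ends ((H \<union> H') - cut ends H S) (fst (term i)) (snd (term i))"
              using i unfolding feasible_augmentation_def by blast
            have neq: "fst (term i) \<noteq> snd (term i)"
            proof
              assume st: "fst (term i) = snd (term i)"
              have "cut ends H V = {}"
                using graph H unfolding ugraph_def cut_def by fastforce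
              then have "p = 0"
              proof -
                have sv: "separates V (fst (term i)) (snd (term i))"
                  using terms i st unfolding separates_def by simp
                have "p \<le> card (cut ends H V \<inter> Safe) \<or> p + q \<le> card (cut ends H V)"
                  using flexH i sv unfolding flex_connected_def by blast
                with \<open>cut ends H V = {}\<close> show "p = 0" by auto
              qed
              then show False using \<open>\<not> p \<le> _\<close> by simp
            qed
            have sd: "(fst (term i) \<in> S) \<noteq> (snd (term i) \<in> S)" using sep_D[OF sep neq] .
            obtain e where e: "e \<in> cut ends ((H \<union> H') - cut ends H S) S"
              using crossing[OF _ sd] \<open>connected_in _ _ _ _\<close> unfolding connected_in_def by blast
            then have e1: "e \<in> cut ends (H \<union> H') S" "e \<notin> cut ends H S"
              unfolding cut_def by auto
            have "insert e (cut ends H S) \<subseteq> cut ends (H \<union> H') S" using e1 sub by auto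
            then have "card (insert e (cut ends H S)) \<le> card (cut ends (H \<union> H') S)"
              using finU by (intro card_mono) auto
            then show ?thesis using e1 finH eq by simp
          qed
        qed
      qed
    qed
  }
qed

end
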